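(* Let $N,M\ge 1$, let $\delta\in(0,1)$, $\eta>0$ and $\epsilon\ge 0$. Let $\mathbf x_\star\in\mathbb C^N$ with $\|\mathbf x_\star\|_2=1$, let $\mathbf a_1,\dots,\mathbf a_M\in\mathbb C^N$, and let $b_i=|\mathbf a_i^*\mathbf x_\star|^2+\xi_i$ for $1\le i\le M$, where $\xi_i\in[0,\eta^{-1}]$. Let $\mathbf a_0\in\mathbb C^N\setminus\{\mathbf 0\}$ be such that $\mathbf a_0^*\mathbf x_\star$ is a positive real number and $|\mathbf a_0^*\mathbf x_\star|\ge\delta\|\mathbf a_0\|_2\|\mathbf x_\star\|_2$. Define $$\mathcal R_\delta=\left\{\mathbf h\in\mathbb C^N:\ \big\|\mathbf h-(\mathbf x_\star^*\mathbf h)\mathbf x_\star\big\|_2\ge\delta\,\big|\mathrm{Im}(\mathbf x_\star^*\mathbf h)\big|\right\}.$$ Suppose that every $\mathbf h\in\mathcal R_\delta$ with $\|\mathbf h\|_2>\epsilon$ violates at least one of the inequalities $$\langle\mathbf a_0,\mathbf h\rangle\ge 0,\qquad \langle\mathbf a_i\mathbf a_i^*\mathbf x_\star,\mathbf h\rangle\le\tfrac12\eta^{-1}\quad(1\le i\le M).$$ Then every solution $\widehat{\mathbf x}$ of the convex program $$\max_{\mathbf x\in\mathbb C^N}\ \langle\mathbf a_0,\mathbf x\rangle\quad\text{subject to}\quad|\mathbf a_i^*\mathbf x|^2\le b_i,\ 1\le i\le M,$$ satisfies $\|\widehat{\mathbf x}-\mathbf x_\star\|_2\le\epsilon$.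
   Context: $\mathbb C^N$ is regarded as a $2N$-dimensional real inner-product space with inner product $\langle\mathbf x_1,\mathbf x_2\rangle=\mathrm{Re}(\mathbf x_1^*\mathbf x_2)$. $\mathbf x^*$ denotes the conjugate transpose. *)

theory Defs
  imports "HOL-Analysis.Analysis"
begin

text \<open>Vectors in C^N are modelled as complex ^ 'n with N = CARD('n).
  cdot x y is the Hermitian product x^* y.\<close>
definition cdot :: "complex ^ 'n \<Rightarrow> complex ^ 'n \<Rightarrow> complex" where
  "cdot x y = (\<Sum>k\<in>UNIV. cnj (x $ k) * y $ k)"

definition rinner :: "complex ^ 'n \<Rightarrow> complex ^ 'n \<Rightarrow> real" where
  "rinner x y = Re (cdot x y)"

definition R_delta :: "real \<Rightarrow> complex ^ 'n \<Rightarrow> (complex ^ 'n) set" where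
  "R_delta \<delta> xs = {h. norm (h - (\<chi> k. cdot xs h * xs $ k)) \<ge> \<delta> * \<bar>Im (cdot xs h)\<bar>}"

end

theory Submission
  imports Defs
begin

lemma cdot_diff: "cdot a (x - y) = cdot a x - cdot a y"
  unfolding cdot_def by (simp add: right_diff_distrib sum_subtractf)

lemma rinner_diff: "rinner a (x - y) = rinner a x - rinner a y"
  unfolding rinner_def by (simp add: cdot_diff)

lemma cdot_scale: "cdot a (\<chi> k. c * x $ k) = c * cdot a x"
  unfolding cdot_def by (simp add: sum_distrib_left algebra_simps)

lemma cdot_scale_left: "cdot (\<chi> k. c * x $ k) y = cnj c * cdot x y"
  unfolding cdot_def by (simp add: sum_distrib_left algebra_simps)

lemma cdot_CS: "cmod (cdot x y) \<le> norm x * norm y"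
proof -
  have "cmod (cdot x y) \<le> (\<Sum>k\<in>UNIV. cmod (cnj (x $ k) * y $ k))"
    unfolding cdot_def by (rule norm_sum)
  also have "\<dots> = (\<Sum>k\<in>UNIV. \<bar>cmod (x $ k)\<bar> * \<bar>cmod (y $ k)\<bar>)"
    by (simp add: norm_mult)
  also have "\<dots> \<le> L2_set (\<lambda>k. cmod (x $ k)) UNIV * L2_set (\<lambda>k. cmod (y $ k)) UNIV"
    by (rule L2_set_mult_ineq)
  also have "\<dots> = norm x * norm y" by (simp add: norm_vec_def)
  finally show ?thesis .
qed

lemma cmod_add_sq: "(cmod (u + w))\<^sup>2 = (cmod u)\<^sup>2 + 2 * Re (cnj u * w) + (cmod w)\<^sup>2"
  unfolding cmod_power2 by (simp add: power2_eq_square algebra_simps)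

theorem lemma1:
  fixes M :: nat and \<delta> \<eta> \<epsilon> :: real
    and xs a0 :: "complex ^ 'n" and a :: "nat \<Rightarrow> complex ^ 'n"
    and \<xi> b :: "nat \<Rightarrow> real" and xhat :: "complex ^ 'n"
  assumes "M \<ge> 1"
    and "0 < \<delta>" "\<delta> < 1" "\<eta> > 0" "\<epsilon> \<ge> 0"
    and "norm xs = 1"
    and "\<And>i. i \<in> {1..M} \<Longrightarrow> b i = (cmod (cdot (a i) xs))\<^sup>2 + \<xi> i"
    and "\<And>i. i \<in> {1..M} \<Longrightarrow> \<xi> i \<in> {0..1 / \<eta>}"
    and "a0 \<noteq> 0"
    and "cdot a0 xs \<in> \<real>" "Re (cdot a0 xs) > 0"
    and "cmod (cdot a0 xs) \<ge> \<delta> * norm a0 * norm xs"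
    and "\<And>h. h \<in> R_delta \<delta> xs \<Longrightarrow> norm h > \<epsilon> \<Longrightarrow>
           \<not> (rinner a0 h \<ge> 0 \<and>
              (\<forall>i\<in>{1..M}. rinner (\<chi> k. cdot (a i) xs * a i $ k) h \<le> 1 / 2 * (1 / \<eta>)))"
    and "\<forall>i\<in>{1..M}. (cmod (cdot (a i) xhat))\<^sup>2 \<le> b i"
    and "\<forall>x. (\<forall>i\<in>{1..M}. (cmod (cdot (a i) x))\<^sup>2 \<le> b i) \<longrightarrow> rinner a0 x \<le> rinner a0 xhat"
  shows "norm (xhat - xs) \<le> \<epsilon>"
proof (rule ccontr)
  assume neg: "\<not> norm (xhat - xs) \<le> \<epsilon>"
  define h where "h = xhat - xs"
  have feas: "\<forall>i\<in>{1..M}. (cmod (cdot (a i) xs))\<^sup>2 \<le> b i"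
    using assms(7,8) by fastforce
  have A: "rinner a0 h \<ge> 0"
    using assms(15) feas unfolding h_def rinner_diff by force
  have B: "\<forall>i\<in>{1..M}. rinner (\<chi> k. cdot (a i) xs * a i $ k) h \<le> 1 / 2 * (1 / \<eta>)"
  proof
    fix i assume i: "i \<in> {1..M}"
    define u where "u = cdot (a i) xs"
    define w where "w = cdot (a i) h"
    have "cdot (a i) xhat = u + w" unfolding u_def w_def h_def cdot_diff by simp
    hence "(cmod u)\<^sup>2 + 2 * Re (cnj u * w) + (cmod w)\<^sup>2 \<le> (cmod u)\<^sup>2 + \<xi> i"
      using assms(14) assms(7)[OF i] i by (metis cmod_add_sq u_def)
    moreover have "\<xi> i \<le> 1 / \<eta>" using assms(8)[OF i] by simp
    moreover have "(cmod w)\<^sup>2 \<ge> 0" by simp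
    ultimately have "Re (cnj u * w) \<le> 1/2 * (1/\<eta>)" by linarith
    thus "rinner (\<chi> k. cdot (a i) xs * a i $ k) h \<le> 1 / 2 * (1 / \<eta>)"
      unfolding rinner_def cdot_scale_left u_def w_def by simp
  qed
  have C: "Im (cdot a0 xhat) = 0"
  proof (cases "cdot a0 xhat = 0")
    case True thus ?thesis by simp
  next
    case False
    define w where "w = cdot a0 xhat"
    define c where "c = cnj w / cmod w"
    have cm: "cmod c = 1" using False unfolding c_def w_def by (simp add: norm_divide)
    have "\<forall>i\<in>{1..M}. (cmod (cdot (a i) (\<chi> k. c * xhat $ k)))\<^sup>2 \<le> b i"
      using assms(14) by (simp add: cdot_scale norm_mult cm)
    hence "rinner a0 (\<chi> k. c * xhat $ k) \<le> rinner a0 xhat" using assms(15) by blast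
    moreover have "rinner a0 (\<chi> k. c * xhat $ k) = cmod w"
    proof -
      have "c * w = of_real (cmod w)"
      proof -
        have "c * w = (w * cnj w) / of_real (cmod w)" unfolding c_def by (simp add: field_simps)
        also have "\<dots> = of_real ((cmod w)\<^sup>2) / of_real (cmod w)"
          by (simp add: complex_norm_square[symmetric])
        also have "\<dots> = of_real (cmod w)" using False unfolding w_def
          by (simp add: power2_eq_square)
        finally show ?thesis .
      qed
      thus ?thesis unfolding rinner_def cdot_scale w_def by simp
    qed
    ultimately have "cmod w \<le> Re w" unfolding rinner_def w_def by simp
    hence "(cmod w)\<^sup>2 \<le> (Re w)\<^sup>2" by (meson abs_ge_self abs_le_square_iff complex_Re_le_cmod order.trans norm_ge_zero power_mono)
    hence "(Im w)\<^sup>2 \<le> 0" unfolding cmod_power2 by simp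
    thus ?thesis unfolding w_def by simp
  qed
  define r where "r = Re (cdot a0 xs)"
  have r0: "cdot a0 xs = of_real r" using assms(10) unfolding r_def
    by (metis Reals_cases Re_complex_of_real)
  have rpos: "r > 0" using assms(11) r_def by simp
  define z where "z = h - (\<chi> k. cdot xs h * xs $ k)"
  have cz: "cdot a0 z = cdot a0 h - cdot xs h * of_real r"
    unfolding z_def cdot_diff cdot_scale r0 by simp
  have "Im (cdot a0 h) = 0" unfolding h_def cdot_diff using C r0 by simp
  hence imz: "Im (cdot a0 z) = - Im (cdot xs h) * r" unfolding cz by simp
  have "r * \<bar>Im (cdot xs h)\<bar> \<le> norm a0 * norm z"
  proof -
    have "r * \<bar>Im (cdot xs h)\<bar> = \<bar>Im (cdot a0 z)\<bar>" using imz rpos by (simp add: abs_mult)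
    also have "\<dots> \<le> cmod (cdot a0 z)" by (rule abs_Im_le_cmod)
    also have "\<dots> \<le> norm a0 * norm z" by (rule cdot_CS)
    finally show ?thesis .
  qed
  moreover have "\<delta> * norm a0 \<le> r" using assms(12) assms(6) r0 rpos by simp
  ultimately have "\<delta> * (r * \<bar>Im (cdot xs h)\<bar>) \<le> r * norm z"
    by (smt (verit, best) assms(2) mult_left_mono mult_right_mono norm_ge_zero mult.assoc)
  hence "r * (\<delta> * \<bar>Im (cdot xs h)\<bar>) \<le> r * norm z" by (simp add: algebra_simps)
  hence "\<delta> * \<bar>Im (cdot xs h)\<bar> \<le> norm z" using rpos by simp
  hence "h \<in> R_delta \<delta> xs" unfolding R_delta_def z_def by simp
  moreover have "norm h > \<epsilon>" using neg h_def by simp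
  ultimately show False using assms(13) A B by blast
qed

end
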